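(* In the following instance, $\mathrm{OPT}=\Omega(n\ln n/\ln\ln n)$; that is, there exist constants $\kappa>0$ and $n_0$ such that $\mathrm{OPT}\ge\kappa\, n\ln n/\ln\ln n$ for all $n\ge n_0$. Instance: $n$ unit-demand bidders and $m=n^2$ items; for each bidder $i$ and item $\ell$, the signal $s_{i\ell}$ equals $1$ with probability $1/n$ and $0$ with probability $1-1/n$, all signals mutually independent; bidder $i$'s value for item $\ell$ is $v_{i\ell}(\mathbf s)=1+\sum_{j=1}^n s_{j\ell}$.
   Context: Unit-demand: bidder $i$'s value for a set $T$ of items is $\max_{\ell\in T}v_{i\ell}(\mathbf s)$ (and $0$ for $T=\emptyset$). $\mathrm{OPT}=\mathbb E_{\mathbf s}[\mathrm{OPT}(\mathbf s)]$, where $\mathrm{OPT}(\mathbf s)$ is the maximum total value $\sum_{(i,\ell)\in\mu}v_{i\ell}(\mathbf s)$ over matchings $\mu$ of bidders to items (each bidder gets at most one item and each item goes to at most one bidder). *)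

theory Defs
  imports "HOL-Probability.Probability"
begin

definition is_matching :: "nat \<Rightarrow> nat \<Rightarrow> (nat \<times> nat) set \<Rightarrow> bool" where
  "is_matching n m \<mu> \<longleftrightarrow> \<mu> \<subseteq> {..<n} \<times> {..<m} \<and>
     (\<forall>i l i' l'. (i, l) \<in> \<mu> \<longrightarrow> (i', l') \<in> \<mu> \<longrightarrow> (i = i' \<longleftrightarrow> l = l'))"

text \<open>OPT(s): maximal total value over matchings, given values v i l (already
  evaluated at the signal profile).\<close>
definition opt_value :: "nat \<Rightarrow> nat \<Rightarrow> (nat \<Rightarrow> nat \<Rightarrow> real) \<Rightarrow> real" where
  "opt_value n m v = Max ((\<lambda>\<mu>. \<Sum>(i, l)\<in>\<mu>. v i l) ` {\<mu>. is_matching n m \<mu>})"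

definition signal_pmf :: "nat \<Rightarrow> (nat \<times> nat \<Rightarrow> bool) pmf" where
  "signal_pmf n = Pi_pmf ({..<n} \<times> {..<n^2}) False (\<lambda>_. bernoulli_pmf (1 / real n))"

definition inst_value :: "nat \<Rightarrow> (nat \<times> nat \<Rightarrow> bool) \<Rightarrow> nat \<Rightarrow> nat \<Rightarrow> real" where
  "inst_value n s i l = 1 + (\<Sum>j<n. if s (j, l) then 1 else 0)"

definition OPT :: "nat \<Rightarrow> real" where
  "OPT n = measure_pmf.expectation (signal_pmf n) (\<lambda>s. opt_value n (n^2) (inst_value n s))"

end

theory Submission
  imports Defs "HOL-Real_Asymp.Real_Asymp"
begin


lemma curry_Pi_pmf:
  fixes I :: "'a set" and J :: "'b set"
  assumes fI: "finite I" and fJ: "finite J"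
  shows "Pi_pmf (I \<times> J) False (\<lambda>_. q) =
     map_pmf (\<lambda>F (j, l). F l j) (Pi_pmf J (\<lambda>_. False) (\<lambda>_. Pi_pmf I False (\<lambda>_. q)))"
    (is "?L = map_pmf ?phi ?Q")
proof (rule pmf_eqI)
  fix g :: "'a \<times> 'b \<Rightarrow> bool"
  define psi where "psi = (\<lambda>l j. g (j, l))"
  have inj: "inj ?phi" proof (rule injI)
    fix x y :: "'b \<Rightarrow> 'a \<Rightarrow> bool" assume h: "(\<lambda>(j, l). x l j) = (\<lambda>(j, l). y l j)"
    show "x = y"
    proof (intro ext)
      fix l j show "x l j = y l j" using fun_cong[OF h, of "(j, l)"] by simp
    qed
  qed
  have "pmf (map_pmf ?phi ?Q) g = pmf (map_pmf ?phi ?Q) (?phi psi)"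
    by (simp add: psi_def)
  also have "\<dots> = pmf ?Q psi" by (rule pmf_map_inj') (rule inj)
  finally have eq: "pmf (map_pmf ?phi ?Q) g = pmf ?Q psi" .
  show "pmf ?L g = pmf (map_pmf ?phi ?Q) g"
  proof (cases "\<forall>x. x \<notin> I \<times> J \<longrightarrow> g x = False")
    case True
    have "pmf ?Q psi = (\<Prod>l\<in>J. pmf (Pi_pmf I False (\<lambda>_. q)) (psi l))"
      by (rule pmf_Pi') (use fJ True in \<open>auto simp: psi_def\<close>)
    also have "\<dots> = (\<Prod>l\<in>J. \<Prod>j\<in>I. pmf q (g (j, l)))"
      by (intro prod.cong refl, subst pmf_Pi') (use fI True in \<open>auto simp: psi_def\<close>)
    also have "\<dots> = (\<Prod>x\<in>I \<times> J. pmf q (g x))"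
      by (subst prod.swap) (simp add: prod.cartesian_product)
    also have "\<dots> = pmf ?L g"
      by (rule pmf_Pi'[symmetric]) (use fI fJ True in auto)
    finally show ?thesis using eq by simp
  next
    case False
    then obtain j l where jl: "(j, l) \<notin> I \<times> J" "g (j, l)" by auto
    have L0: "pmf ?L g = 0" by (rule pmf_Pi_outside) (use fI fJ jl in auto)
    have "pmf ?Q psi = 0"
    proof (cases "l \<in> J")
      case True
      then have "j \<notin> I" using jl by auto
      have z: "pmf (Pi_pmf I False (\<lambda>_. q)) (psi l) = 0"
        by (rule pmf_Pi_outside) (use fI jl \<open>j \<notin> I\<close> in \<open>auto simp: psi_def\<close>)
      show ?thesis using fJ True z by (subst pmf_Pi) (auto intro: prod_zero)
    next
      case False
      show ?thesis by (rule pmf_Pi_outside) (use fJ False jl in \<open>auto simp: psi_def fun_eq_iff\<close>)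
    qed
    then show ?thesis using eq L0 by simp
  qed
qed


lemma opt_ge:
  assumes "is_matching n m \<mu>"
  shows "(\<Sum>(i, l)\<in>\<mu>. v i l) \<le> opt_value n m v"
proof -
  have "{\<mu>. is_matching n m \<mu>} \<subseteq> Pow ({..<n} \<times> {..<m})" by (auto simp: is_matching_def)
  then have "finite {\<mu>. is_matching n m \<mu>}" by (rule finite_subset) auto
  then show ?thesis unfolding opt_value_def using assms by (intro Max_ge) auto
qed

lemma block_bound:
  fixes g n x :: nat
  assumes "g < n" "x \<in> {g*n..<g*n+n}"
  shows "x < n^2"
proof -
  have "x < g*n + n" using assms by auto
  also have "\<dots> \<le> (n - 1) * n + n" using assms by (intro add_right_mono mult_right_mono) auto
  also have "\<dots> = n^2" using assms by (cases n) (auto simp: power2_eq_square algebra_simps)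
  finally show ?thesis .
qed

lemma matching_sum:
  fixes L :: "nat \<Rightarrow> nat"
  assumes L: "\<And>g. g < n \<Longrightarrow> L g \<in> {g*n..<g*n+n}"
  shows "(\<Sum>g<n. v g (L g)) \<le> opt_value n (n^2) v"
proof -
  define \<mu> where "\<mu> = (\<lambda>g. (g, L g)) ` {..<n}"
  have Ldiv: "L g div n = g" if "g < n" for g
    using L[OF that] by (auto intro: div_nat_eqI simp: mult.commute)
  have Lb: "L g < n^2" if "g < n" for g
  proof -
    have "L g < g*n + n" using L[OF that] by auto
    also have "\<dots> \<le> (n - 1) * n + n" using that by (intro add_right_mono mult_right_mono) auto
    also have "\<dots> = n^2" using that by (cases n) (auto simp: power2_eq_square algebra_simps)
    finally show ?thesis .
  qed
  have m: "is_matching n (n^2) \<mu>"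
    unfolding is_matching_def \<mu>_def using Lb Ldiv by auto metis
  have "(\<Sum>(i, l)\<in>\<mu>. v i l) = (\<Sum>g<n. v g (L g))"
    unfolding \<mu>_def by (subst sum.reindex) (auto simp: inj_on_def)
  with opt_ge[OF m, of v] show ?thesis by simp
qed


lemma OPT_lower:
  fixes n k :: nat
  assumes n: "n \<ge> 1"
  shows "OPT n \<ge> real n * real k *
     (1 - (1 - real (n choose k) * (1 / real n)^k * (1 - 1 / real n)^(n - k))^n)"
proof -
  define p where "p = 1 / real n"
  define I where "I = {..<n}"
  define J where "J = {..<n^2}"
  define inner where "inner = Pi_pmf I False (\<lambda>_. bernoulli_pmf p)"
  define Q where "Q = Pi_pmf J (\<lambda>_. False) (\<lambda>_. inner)"
  define phi :: "(nat \<Rightarrow> nat \<Rightarrow> bool) \<Rightarrow> nat \<times> nat \<Rightarrow> bool" where "phi = (\<lambda>F (j, l). F l j)"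
  define G where "G = (\<lambda>g. {g*n..<g*n+n})"
  define cnt where "cnt = (\<lambda>v::nat \<Rightarrow> bool. card {j\<in>I. v j})"
  define f where "f = (\<lambda>g l v. if l \<in> G g then indicator {v. cnt v < k} v else (1::real))"
  define P where "P = measure inner {v. cnt v < k}"
  define q where "q = real (n choose k) * p^k * (1 - p)^(n - k)"
  have p01: "p \<in> {0..1}" using n by (auto simp: p_def)
  have fI: "finite I" and fJ: "finite J" by (auto simp: I_def J_def)
  have sig: "signal_pmf n = map_pmf phi Q"
    unfolding signal_pmf_def Q_def inner_def phi_def p_def I_def J_def
    by (rule curry_Pi_pmf) auto
  have finQ: "finite (set_pmf Q)"
  proof -
    have "set_pmf Q = PiE_dflt J (\<lambda>_. False) (set_pmf \<circ> (\<lambda>_. inner))"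
      unfolding Q_def by (rule set_Pi_pmf[OF fJ])
    moreover have "finite (set_pmf inner)"
      unfolding inner_def by (subst set_Pi_pmf[OF fI]) (auto intro!: finite_PiE_dflt fI)
    ultimately show ?thesis by (auto intro!: finite_PiE_dflt fJ)
  qed
  have intQ: "integrable Q h" for h :: "_ \<Rightarrow> real" by (rule integrable_measure_pmf_finite[OF finQ])
  have finI: "finite (set_pmf inner)"
    unfolding inner_def by (subst set_Pi_pmf[OF fI]) (auto intro!: finite_PiE_dflt fI)
  have intI: "integrable inner h" for h :: "_ \<Rightarrow> real" by (rule integrable_measure_pmf_finite[OF finI])
  have pw: "(\<Sum>g<n. real k * (1 - (\<Prod>l\<in>J. f g l (F l)))) \<le> opt_value n (n^2) (inst_value n (phi F))" for F
  proof -
    define L where "L = (\<lambda>g. if \<exists>l\<in>G g. cnt (F l) \<ge> k then (SOME l. l \<in> G g \<and> cnt (F l) \<ge> k) else g*n)"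
    have LG: "L g \<in> G g" if "g < n" for g
    proof (cases "\<exists>l\<in>G g. cnt (F l) \<ge> k")
      case True
      then show ?thesis unfolding L_def by (simp, metis (mono_tags, lifting) someI_ex)
    next
      case False
      then show ?thesis using n unfolding L_def G_def by simp
    qed
    have iv: "inst_value n (phi F) i l = 1 + real (cnt (F l))" for i l
    proof -
      have "(\<Sum>j<n. if phi F (j, l) then 1 else 0) = (\<Sum>j\<in>I. if F l j then 1 else (0::real))"
        by (simp add: phi_def I_def)
      also have "\<dots> = real (cnt (F l))" unfolding cnt_def
        by (subst sum.If_cases[OF fI]) (simp add: Int_def)
      finally show ?thesis by (simp add: inst_value_def)
    qed
    have trm: "real k * (1 - (\<Prod>l\<in>J. f g l (F l))) \<le> inst_value n (phi F) g (L g)" if g: "g < n" for g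
    proof (cases "\<exists>l\<in>G g. cnt (F l) \<ge> k")
      case True
      then have Lp: "L g \<in> G g \<and> cnt (F (L g)) \<ge> k" unfolding L_def by (simp, metis (mono_tags, lifting) someI_ex)
      have "L g \<in> J" using Lp g block_bound[of g n "L g"] by (auto simp: J_def G_def)
      then have "(\<Prod>l\<in>J. f g l (F l)) = 0" using Lp fJ
        by (intro prod_zero bexI[of _ "L g"]) (auto simp: f_def)
      then show ?thesis using Lp by (simp add: iv)
    next
      case False
      then have "(\<Prod>l\<in>J. f g l (F l)) = 1"
        by (intro prod.neutral) (auto simp: f_def not_le)
      then show ?thesis by (simp add: iv)
    qed
    have "(\<Sum>g<n. real k * (1 - (\<Prod>l\<in>J. f g l (F l)))) \<le> (\<Sum>g<n. inst_value n (phi F) g (L g))"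
      by (intro sum_mono trm) auto
    also have "\<dots> \<le> opt_value n (n^2) (inst_value n (phi F))"
      by (rule matching_sum) (use LG in \<open>auto simp: G_def\<close>)
    finally show ?thesis .
  qed
  have Pq: "P \<le> 1 - q"
  proof -
    have B: "binomial_pmf n p = map_pmf cnt inner"
      unfolding cnt_def inner_def by (rule binomial_pmf_altdef') (use p01 in \<open>auto simp: I_def\<close>)
    have "P = measure (binomial_pmf n p) {..<k}"
      unfolding B P_def by (simp add: vimage_def)
    moreover have "measure (binomial_pmf n p) {k} = q"
      using p01 by (simp add: measure_pmf_single q_def)
    moreover have "measure (binomial_pmf n p) {..<k} + measure (binomial_pmf n p) {k} =
        measure (binomial_pmf n p) ({..<k} \<union> {k})"
      by (subst measure_pmf.finite_measure_Union) auto
    moreover have "measure (binomial_pmf n p) ({..<k} \<union> {k}) \<le> 1" by simp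
    ultimately show ?thesis by linarith
  qed
  have P0: "P \<ge> 0" by (simp add: P_def)
  have Eprod: "measure_pmf.expectation Q (\<lambda>F. \<Prod>l\<in>J. f g l (F l)) = P ^ n" if g: "g < n" for g
  proof -
    have "measure_pmf.expectation Q (\<lambda>F. \<Prod>l\<in>J. f g l (F l)) =
        (\<Prod>l\<in>J. measure_pmf.expectation inner (f g l))"
      unfolding Q_def by (rule expectation_prod_Pi_pmf[OF fJ intI]) (auto simp: f_def)
    also have "\<dots> = (\<Prod>l\<in>J. if l \<in> G g then P else 1)"
      by (intro prod.cong refl) (auto simp: f_def P_def)
    also have "\<dots> = (\<Prod>l\<in>G g. P)"
    proof -
      have "G g \<subseteq> J" using g block_bound[of g n] by (auto simp: G_def J_def)
      then show ?thesis
        by (subst prod.If_cases[OF fJ]) (simp add: Int_absorb1)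
    qed
    also have "\<dots> = P ^ n" by (simp add: G_def)
    finally show ?thesis .
  qed
  have "OPT n = measure_pmf.expectation Q (\<lambda>F. opt_value n (n^2) (inst_value n (phi F)))"
    unfolding OPT_def sig by simp
  also have "\<dots> \<ge> measure_pmf.expectation Q (\<lambda>F. \<Sum>g<n. real k * (1 - (\<Prod>l\<in>J. f g l (F l))))"
    by (intro integral_mono intQ pw)
  moreover have "measure_pmf.expectation Q (\<lambda>F. \<Sum>g<n. real k * (1 - (\<Prod>l\<in>J. f g l (F l))))
      = (\<Sum>g<n. real k * (1 - P ^ n))"
    by (simp add: intQ Eprod)
  moreover have "(\<Sum>g<n. real k * (1 - P ^ n)) = real n * real k * (1 - P ^ n)" by simp
  moreover have "P ^ n \<le> (1 - q) ^ n" using P0 Pq by (intro power_mono) auto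
  ultimately have "OPT n \<ge> real n * real k * (1 - (1 - q) ^ n)"
    by (smt (verit, ccfv_SIG) mult_left_mono of_nat_0_le_iff zero_le_mult_iff)
  then show ?thesis by (simp add: q_def p_def)
qed



lemma ev1: "eventually (\<lambda>x::real. 4 \<le> ln x) at_top"
  by real_asymp
lemma ev2: "eventually (\<lambda>x::real. 4 * ln (ln x) \<le> ln x) at_top"
  by real_asymp
lemma ev: "eventually (\<lambda>x::real. 4 \<le> ln x \<and> 4 * ln (ln x) \<le> ln x) at_top"
  using eventually_conj[OF ev1 ev2] .

lemma evn: "eventually (\<lambda>n::nat. 4 \<le> ln (real n) \<and> 4 * ln (ln (real n)) \<le> ln (real n)) sequentially"
  using eventually_compose_filterlim[OF ev filterlim_real_sequentially] by simp

lemma one_minus_pow_lower: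
  fixes n :: nat assumes "n \<ge> 2"
  shows "exp (-2) \<le> (1 - 1 / real n) ^ n"
proof -
  have x: "0 \<le> 1 / real n" "1 / real n \<le> 1/2" using assms by auto
  have l: "- (1 / real n) - 2 * (1 / real n)^2 \<le> ln (1 - 1 / real n)"
    by (rule ln_one_minus_pos_lower_bound[OF x])
  have "2 * (1/real n)^2 \<le> 1 / real n" using assms by (simp add: power2_eq_square field_simps)
  with l have "-2 / real n \<le> ln (1 - 1 / real n)" by simp
  then have "-2 \<le> real n * ln (1 - 1 / real n)" using assms by (simp add: field_simps)
  then have "exp (-2) \<le> exp (real n * ln (1 - 1 / real n))" by simp
  also have "\<dots> = (1 - 1 / real n) ^ n"
    using assms by (subst exp_of_nat_mult) (simp)
  finally show ?thesis .
qed

lemma one_minus_pow_upper: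
  fixes n :: nat assumes "n \<ge> 1"
  shows "(1 - 1 / real n) ^ n \<le> 1/2"
proof -
  have "(1 - 1 / real n) ^ n \<le> exp (- 1 / real n) ^ n"
    using assms by (intro power_mono) (use exp_ge_add_one_self[of "- 1 / real n"] in auto)
  also have "\<dots> = exp (-1)" using assms by (simp add: exp_of_nat_mult[symmetric])
  also have "\<dots> \<le> 1/2"
  proof -
    have "2 \<le> exp (1::real)" using exp_ge_add_one_self[of 1] by simp
    then show ?thesis by (simp add: exp_minus field_simps)
  qed
  finally show ?thesis .
qed


lemma analytic:
  fixes n :: nat
  assumes L4: "4 \<le> ln (real n)" and LLb: "4 * ln (ln (real n)) \<le> ln (real n)"
    and q1: "real (n choose (nat \<lfloor>ln (real n) / (2 * ln (ln (real n)))\<rfloor>)) * (1 / real n) ^ (nat \<lfloor>ln (real n) / (2 * ln (ln (real n)))\<rfloor>)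
             * (1 - 1 / real n) ^ (n - nat \<lfloor>ln (real n) / (2 * ln (ln (real n)))\<rfloor>) \<le> 1"
  shows "real n * ln (real n) / (8 * ln (ln (real n))) \<le>
     real n * real (nat \<lfloor>ln (real n) / (2 * ln (ln (real n)))\<rfloor>) *
       (1 - (1 - real (n choose (nat \<lfloor>ln (real n) / (2 * ln (ln (real n)))\<rfloor>)) * (1 / real n) ^ (nat \<lfloor>ln (real n) / (2 * ln (ln (real n)))\<rfloor>)
             * (1 - 1 / real n) ^ (n - nat \<lfloor>ln (real n) / (2 * ln (ln (real n)))\<rfloor>)) ^ n)"
proof -
  define L where "L = ln (real n)"
  define M where "M = ln L"
  define x where "x = L / (2 * M)"
  define k where "k = nat \<lfloor>x\<rfloor>"
  define q where "q = real (n choose k) * (1 / real n) ^ k * (1 - 1 / real n) ^ (n - k)"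
  have L4': "4 \<le> L" and LL': "4 * M \<le> L" using L4 LLb by (auto simp: L_def M_def)
  have npos: "real n > 0" using L4 by (cases "n = 0") auto
  have n2: "n \<ge> 2"
  proof (rule ccontr)
    assume "\<not> n \<ge> 2" then have "n = 1" using npos by auto
    then show False using L4 by simp
  qed
  have M34: "M \<ge> 3/4"
  proof -
    have "ln (1 / L) \<le> 1 / L - 1" using L4' by (intro ln_le_minus_one) auto
    then have "- M \<le> 1 / L - 1" using L4' by (simp add: M_def ln_div)
    moreover have "1 / L \<le> 1/4" using L4' by (simp add: field_simps)
    ultimately show ?thesis by linarith
  qed
  have x2: "x \<ge> 2" using LL' M34 by (simp add: x_def field_simps)
  have xL: "x \<le> L" using M34 L4' by (simp add: x_def field_simps)
  have kf: "real k = of_int \<lfloor>x\<rfloor>" using x2 by (simp add: k_def)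
  have kx: "real k \<le> x" using kf by simp
  have "x < of_int \<lfloor>x\<rfloor> + 1" by (rule real_of_int_floor_add_one_gt)
  then have kx2: "real k \<ge> x / 2" using kf x2 by linarith
  have k1: "real k \<ge> 1" using kx2 x2 by linarith
  have Ln: "L \<le> real n" using npos ln_bound[OF npos] by (simp add: L_def)
  have kn: "k \<le> n" using kx xL Ln by linarith
  have "real k * ln (real k) \<le> x * M"
  proof (rule mult_mono)
    show "ln (real k) \<le> M" unfolding M_def using k1 kx xL by (subst ln_le_cancel_iff) auto
  qed (use kx k1 M34 in auto)
  also have "x * M = L / 2" using M34 by (simp add: x_def field_simps)
  finally have e1: "real k * ln (real k) \<le> L - 2" using L4' by linarith
  have "real k ^ k = exp (real k * ln (real k))"
    using k1 by (simp add: powr_realpow[symmetric] powr_def)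
  also have "\<dots> \<le> exp (L - 2)" using e1 by simp
  also have "exp (L - 2) = real n * exp (-2)" using npos by (simp add: L_def exp_diff exp_minus field_simps)
  finally have kk: "real k ^ k \<le> real n * exp (-2)" .
  have kkpos: "real k ^ k > 0" using k1 by simp
  have "1 / real n \<le> exp (-2) / real k ^ k"
    using kk kkpos npos by (simp add: field_simps)
  also have "\<dots> = (real n / real k) ^ k * (1 / real n) ^ k * exp (-2)"
    using npos k1 by (simp add: field_simps power_divide)
  also have "\<dots> \<le> real (n choose k) * (1 / real n) ^ k * (1 - 1 / real n) ^ (n - k)"
  proof (intro mult_mono)
    show "(real n / real k) ^ k \<le> real (n choose k)" using binomial_ge_n_over_k_pow_k[OF kn] by simp
    have "exp (-2) \<le> (1 - 1 / real n) ^ n" by (rule one_minus_pow_lower[OF n2])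
    also have "\<dots> \<le> (1 - 1 / real n) ^ (n - k)" using npos by (intro power_decreasing) auto
    finally show "exp (-2) \<le> (1 - 1 / real n) ^ (n - k)" .
  qed (use npos in auto)
  finally have qn: "1 / real n \<le> q" by (simp add: q_def)
  have q1': "q \<le> 1" using q1 by (simp add: q_def k_def x_def L_def M_def)
  have "(1 - q) ^ n \<le> (1 - 1 / real n) ^ n" using qn q1' by (intro power_mono) auto
  also have "\<dots> \<le> 1/2" using n2 by (intro one_minus_pow_upper) auto
  finally have h: "1 - (1 - q) ^ n \<ge> 1/2" by simp
  have "real n * L / (8 * M) = real n * (x / 2) * (1/2)" using M34 by (simp add: x_def field_simps)
  also have "\<dots> \<le> real n * real k * (1 - (1 - q) ^ n)"
    using kx2 h npos x2 by (intro mult_mono) auto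
  finally show ?thesis by (simp add: q_def k_def x_def L_def M_def)
qed


lemma q_le_1:
  fixes n k :: nat assumes "n \<ge> 1"
  shows "real (n choose k) * (1 / real n) ^ k * (1 - 1 / real n) ^ (n - k) \<le> 1"
proof -
  have p: "0 \<le> 1 / real n" "1 / real n \<le> 1" using assms by auto
  have "pmf (binomial_pmf n (1 / real n)) k \<le> 1" by (rule pmf_le_1)
  then show ?thesis using p by simp
qed

theorem mainTheorem5:
  shows "\<exists>\<kappa>::real. \<kappa> > 0 \<and> (\<exists>n0::nat. \<forall>n\<ge>n0.
           OPT n \<ge> \<kappa> * real n * ln (real n) / ln (ln (real n)))"
proof -
  obtain N where N: "\<And>n. n \<ge> N \<Longrightarrow> 4 \<le> ln (real n) \<and> 4 * ln (ln (real n)) \<le> ln (real n)"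
    using evn unfolding eventually_sequentially by blast
  have "OPT n \<ge> (1/8) * real n * ln (real n) / ln (ln (real n))" if "n \<ge> N" for n
  proof -
    have c: "4 \<le> ln (real n)" "4 * ln (ln (real n)) \<le> ln (real n)" using N[OF that] by auto
    have n1: "n \<ge> 1" using c(1) by (cases n) auto
    show ?thesis using order_trans[OF analytic[OF c q_le_1[OF n1]] OPT_lower[OF n1]] by simp
  qed
  then show ?thesis by (intro exI[of _ "1/8::real"]) auto
qed

end
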